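(* Let $G$ be a compact group with normalized Haar measure $dg$ and let $V$ be a finite-dimensional unitary complex representation of $G$ which decomposes as $V\cong\bigoplus_{\ell=1}^L V_\ell^{\oplus R_\ell}$, where $V_1,\ldots,V_L$ are pairwise non-isomorphic irreducible representations with $\dim V_\ell=N_\ell$. Fix, for each $\ell$, an orthonormal basis of $V_\ell$, and a $G$-equivariant unitary isomorphism of $V$ with $\bigoplus_\ell V_\ell^{\oplus R_\ell}$, so that each $f\in V$ is represented by an $L$-tuple $(A_1,\ldots,A_L)$, where $A_\ell$ is the complex $N_\ell\times R_\ell$ matrix whose $i$-th column is the coordinate vector of the component of $f$ in the $i$-th copy of $V_\ell$. Let $H=\prod_{\ell=1}^L U(N_\ell)$ act on $V$ by $(U_1,\ldots,U_L)\cdot(A_1,\ldots,A_L)=(U_1A_1,\ldots,U_LA_L)$. For $f\in V$ define the second moment $m^2_f=\int_G (g\cdot f)(g\cdot f)^*\,dg$ (with respect to an orthonormal basis of $V$). Then for $f,f'\in V$, $m^2_f=m^2_{f'}$ if and only if $f=h\cdot f'$ for some $h\in H$.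
   Context: Every finite-dimensional representation of a compact group is unitary and decomposes as a direct sum of irreducible representations; $V_\ell^{\oplus R_\ell}$ denotes the direct sum of $R_\ell$ copies of $V_\ell$. $U(n)$ denotes the group of $n\times n$ unitary matrices. *)

theory Defs
  imports "HOL-Probability.Probability" "Jordan_Normal_Form.Schur_Decomposition"
begin

text \<open>The compact group G is a type 'g of class topological_group_add (group law written
  additively, not assumed commutative) and t2_space, with compact (UNIV :: 'g set).\<close>

definition normalized_haar :: "'g::topological_group_add measure \<Rightarrow> bool" where
  "normalized_haar M \<longleftrightarrow> prob_space M \<and> sets M = sets borel \<and>
     (\<forall>g. \<forall>A\<in>sets M. emeasure M ((\<lambda>x. g + x) ` A) = emeasure M A)"

definition unitary_mat :: "nat \<Rightarrow> complex mat \<Rightarrow> bool" where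
  "unitary_mat n U \<longleftrightarrow> U \<in> carrier_mat n n \<and> mat_adjoint U * U = 1\<^sub>m n"

definition unitary_rep :: "nat \<Rightarrow> ('g::topological_group_add \<Rightarrow> complex mat) \<Rightarrow> bool" where
  "unitary_rep n \<rho> \<longleftrightarrow> (\<forall>g. unitary_mat n (\<rho> g)) \<and>
     (\<forall>g h. \<rho> (g + h) = \<rho> g * \<rho> h) \<and>
     (\<forall>i<n. \<forall>j<n. continuous_on UNIV (\<lambda>g. \<rho> g $$ (i, j)))"

definition invariant_subspace :: "nat \<Rightarrow> ('g \<Rightarrow> complex mat) \<Rightarrow> complex vec set \<Rightarrow> bool" where
  "invariant_subspace n \<rho> W \<longleftrightarrow> W \<subseteq> carrier_vec n \<and> 0\<^sub>v n \<in> W \<and>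
     (\<forall>v\<in>W. \<forall>w\<in>W. v + w \<in> W) \<and> (\<forall>c. \<forall>v\<in>W. c \<cdot>\<^sub>v v \<in> W) \<and>
     (\<forall>g. \<forall>v\<in>W. \<rho> g *\<^sub>v v \<in> W)"

definition irreducible_rep :: "nat \<Rightarrow> ('g::topological_group_add \<Rightarrow> complex mat) \<Rightarrow> bool" where
  "irreducible_rep n \<rho> \<longleftrightarrow> unitary_rep n \<rho> \<and> n > 0 \<and>
     (\<forall>W. invariant_subspace n \<rho> W \<longrightarrow> W = {0\<^sub>v n} \<or> W = carrier_vec n)"

definition rep_isomorphic :: "nat \<Rightarrow> ('g \<Rightarrow> complex mat) \<Rightarrow> nat \<Rightarrow> ('g \<Rightarrow> complex mat) \<Rightarrow> bool" where
  "rep_isomorphic n \<rho> n' \<rho>' \<longleftrightarrow> (\<exists>T T'. T \<in> carrier_mat n' n \<and> T' \<in> carrier_mat n n' \<and>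
     T * T' = 1\<^sub>m n' \<and> T' * T = 1\<^sub>m n \<and> (\<forall>g. T * \<rho> g = \<rho>' g * T))"

text \<open>An element f of V = (+)_l V_l^(R_l) is an L-tuple (A_1,...,A_L), A_l an N_l x R_l matrix.
  Its coordinates in the orthonormal basis of V indexed by triples (l,i,r) are A_l[i,r].\<close>
definition V_index :: "nat \<Rightarrow> (nat \<Rightarrow> nat) \<Rightarrow> (nat \<Rightarrow> nat) \<Rightarrow> (nat \<times> nat \<times> nat) set" where
  "V_index L N R = {(l, i, r). l < L \<and> i < N l \<and> r < R l}"

definition in_V :: "nat \<Rightarrow> (nat \<Rightarrow> nat) \<Rightarrow> (nat \<Rightarrow> nat) \<Rightarrow> (nat \<Rightarrow> complex mat) \<Rightarrow> bool" where
  "in_V L N R A \<longleftrightarrow> (\<forall>l<L. A l \<in> carrier_mat (N l) (R l))"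

definition coord :: "(nat \<Rightarrow> complex mat) \<Rightarrow> nat \<times> nat \<times> nat \<Rightarrow> complex" where
  "coord A p = (case p of (l, i, r) \<Rightarrow> A l $$ (i, r))"

definition G_act :: "(nat \<Rightarrow> 'g \<Rightarrow> complex mat) \<Rightarrow> 'g \<Rightarrow> (nat \<Rightarrow> complex mat) \<Rightarrow> (nat \<Rightarrow> complex mat)" where
  "G_act \<rho> g A = (\<lambda>l. \<rho> l g * A l)"

definition second_moment ::
  "nat \<Rightarrow> (nat \<Rightarrow> nat) \<Rightarrow> (nat \<Rightarrow> nat) \<Rightarrow> (nat \<Rightarrow> 'g \<Rightarrow> complex mat) \<Rightarrow> 'g measure
    \<Rightarrow> (nat \<Rightarrow> complex mat) \<Rightarrow> (nat \<times> nat \<times> nat) \<times> (nat \<times> nat \<times> nat) \<Rightarrow> complex" where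
  "second_moment L N R \<rho> M A = (\<lambda>(p, q).
     if p \<in> V_index L N R \<and> q \<in> V_index L N R
     then (\<integral>g. coord (G_act \<rho> g A) p * cnj (coord (G_act \<rho> g A) q) \<partial>M)
     else 0)"

definition H_related :: "nat \<Rightarrow> (nat \<Rightarrow> nat) \<Rightarrow> (nat \<Rightarrow> complex mat) \<Rightarrow> (nat \<Rightarrow> complex mat) \<Rightarrow> bool" where
  "H_related L N A A' \<longleftrightarrow> (\<exists>U. (\<forall>l<L. unitary_mat (N l) (U l)) \<and> (\<forall>l<L. A l = U l * A' l))"

end

theory Submission
  imports Defs "Jordan_Normal_Form.Spectral_Radius"
begin

unbundle no vec_syntax

lemma adj_eq: "mat_adjoint (A::complex mat) = mat (dim_col A) (dim_row A) (\<lambda>(i,j). cnj (A $$ (j,i)))"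
proof (rule eq_matI)
  fix i j assume "i < dim_row (mat (dim_col A) (dim_row A) (\<lambda>(i,j). cnj (A $$ (j,i))))"
    "j < dim_col (mat (dim_col A) (dim_row A) (\<lambda>(i,j). cnj (A $$ (j,i))))"
  then have i: "i < dim_col A" and j: "j < dim_row A" by auto
  show "mat_adjoint A $$ (i, j) = mat (dim_col A) (dim_row A) (\<lambda>(i,j). cnj (A $$ (j,i))) $$ (i, j)"
    using i j by (simp add: mat_adjoint_def mat_of_rows_def)
qed (simp_all add: mat_adjoint_def mat_of_rows_def)

lemma adj_dims[simp]: "dim_row (mat_adjoint (A::complex mat)) = dim_col A"
  "dim_col (mat_adjoint (A::complex mat)) = dim_row A"
  by (simp_all add: adj_eq)

lemma adj_index[simp]: "i < dim_col A \<Longrightarrow> j < dim_row A \<Longrightarrow> mat_adjoint (A::complex mat) $$ (i,j) = cnj (A $$ (j,i))"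
  by (simp add: adj_eq)

lemma adj_carrier[simp]: "(A::complex mat) \<in> carrier_mat n m \<Longrightarrow> mat_adjoint A \<in> carrier_mat m n"
  by (rule carrier_matI) (simp_all add: carrier_matD)

lemma adj_adj[simp]: "mat_adjoint (mat_adjoint (A::complex mat)) = A"
  by (rule eq_matI) auto

lemma adj_mult: assumes "(A::complex mat) \<in> carrier_mat n m" "B \<in> carrier_mat m k"
  shows "mat_adjoint (A*B) = mat_adjoint B * mat_adjoint A"
proof (rule eq_matI)
  fix i j assume "i < dim_row (mat_adjoint B * mat_adjoint A)" "j < dim_col (mat_adjoint B * mat_adjoint A)"
  then have i: "i < k" and j: "j < n" using assms by auto
  have "mat_adjoint (A*B) $$ (i,j) = cnj ((A*B) $$ (j,i))" using i j assms by simp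
  also have "\<dots> = cnj (\<Sum>l\<in>{0..<m}. A$$(j,l) * B$$(l,i))" using i j assms by (simp add: scalar_prod_def)
  also have "\<dots> = (\<Sum>l\<in>{0..<m}. cnj (B$$(l,i)) * cnj (A$$(j,l)))" by (simp add: mult.commute)
  also have "\<dots> = (mat_adjoint B * mat_adjoint A) $$ (i,j)" using i j assms by (simp add: scalar_prod_def)
  finally show "mat_adjoint (A*B) $$ (i,j) = (mat_adjoint B * mat_adjoint A) $$ (i,j)" .
qed (use assms in auto)

lemma adj_one[simp]: "mat_adjoint (1\<^sub>m n :: complex mat) = 1\<^sub>m n"
  by (rule eq_matI) auto

lemma adj_smult: "mat_adjoint (c \<cdot>\<^sub>m (A::complex mat)) = cnj c \<cdot>\<^sub>m mat_adjoint A"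
  by (rule eq_matI) auto

lemma unitary_carrier: "unitary_mat n U \<Longrightarrow> U \<in> carrier_mat n n"
  by (simp add: unitary_mat_def)

lemma unitary_left: "unitary_mat n U \<Longrightarrow> mat_adjoint U * U = 1\<^sub>m n"
  by (simp add: unitary_mat_def)

lemma unitary_right: "unitary_mat n U \<Longrightarrow> U * mat_adjoint U = 1\<^sub>m n"
  unfolding unitary_mat_def by (metis adj_carrier mat_mult_left_right_inverse)

lemma unitary_adj: "unitary_mat n U \<Longrightarrow> unitary_mat n (mat_adjoint U)"
  using unitary_right unfolding unitary_mat_def by auto

lemma unitary_one: "unitary_mat n (1\<^sub>m n)"
  unfolding unitary_mat_def by auto

lemma unitary_cancel: assumes "unitary_mat n U" "X \<in> carrier_mat n k"
  shows "mat_adjoint U * (U * X) = X" "U * (mat_adjoint U * X) = X"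
proof -
  have U: "U \<in> carrier_mat n n" using assms unitary_carrier by auto
  have "mat_adjoint U * (U * X) = (mat_adjoint U * U) * X"
    using U assms(2) by (metis adj_carrier assoc_mult_mat)
  then show "mat_adjoint U * (U * X) = X" using unitary_left[OF assms(1)] assms(2) by simp
  have "U * (mat_adjoint U * X) = (U * mat_adjoint U) * X"
    using U assms(2) by (metis adj_carrier assoc_mult_mat)
  then show "U * (mat_adjoint U * X) = X" using unitary_right[OF assms(1)] assms(2) by simp
qed

lemma unitary_mult: assumes "unitary_mat n U" "unitary_mat n V" shows "unitary_mat n (U*V)"
proof -
  have U: "U \<in> carrier_mat n n" and V: "V \<in> carrier_mat n n" using assms unitary_carrier by auto
  have "mat_adjoint (U*V) * (U*V) = mat_adjoint V * mat_adjoint U * (U * V)"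
    using U V by (simp add: adj_mult)
  also have "\<dots> = mat_adjoint V * (mat_adjoint U * (U * V))"
    by (rule assoc_mult_mat) (use U V in auto)
  also have "\<dots> = 1\<^sub>m n" using unitary_cancel(1)[OF assms(1) V] unitary_left[OF assms(2)] by simp
  finally show ?thesis using U V unfolding unitary_mat_def by auto
qed

lemma delta_mult[simp]: "(if P then 1 else 0) * (x::complex) = (if P then x else 0)" by simp
lemma delta_mult'[simp]: "(x::complex) * (if P then 1 else 0) = (if P then x else 0)" by simp

definition hh :: "nat \<Rightarrow> complex vec \<Rightarrow> complex mat" where
  "hh n w = mat n n (\<lambda>(i,j). (if i = j then 1 else 0) - (2 / (\<Sum>l<n. cnj (w$l) * w$l)) * w$i * cnj (w$j))"

lemma sumsq_real: "cnj (\<Sum>l<n. cnj (w$l) * w$l) = (\<Sum>l<n. cnj (w$l) * w$l)"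
  by (simp add: cnj_sum mult.commute)

lemma sumsq_nz: assumes "w \<in> carrier_vec n" "w \<noteq> 0\<^sub>v n"
  shows "(\<Sum>l<n. cnj (w$l) * w$l) \<noteq> 0"
proof -
  obtain i where i: "i < n" "w $ i \<noteq> 0" using assms by (metis carrier_vecD eq_vecI index_zero_vec)
  have eq: "(\<Sum>l<n. cnj (w$l) * w$l) = of_real (\<Sum>l<n. (cmod (w$l))^2)"
    unfolding of_real_sum by (rule sum.cong) (simp_all only: complex_norm_square mult.commute)
  have "(\<Sum>l<n. (cmod (w$l))^2) > 0"
    using i by (intro sum_pos2[of _ i]) auto
  then show ?thesis unfolding eq using of_real_eq_0_iff by (metis less_irrefl)
qed

lemma hh_unitary: assumes "w \<in> carrier_vec n" "w \<noteq> 0\<^sub>v n"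
  shows "unitary_mat n (hh n w)"
proof -
  define k where "k = (\<Sum>l<n. cnj (w$l) * w$l)"
  have k0: "k \<noteq> 0" using sumsq_nz[OF assms] k_def by simp
  have kr: "cnj k = k" using sumsq_real k_def by simp
  define c where "c = 2 / k"
  have cr: "cnj c = c" using kr by (simp add: c_def)
  have hc: "c * c * k = 2 * c" using k0 by (simp add: c_def field_simps)
  have H: "hh n w = mat n n (\<lambda>(i,j). (if i = j then 1 else 0) - c * w$i * cnj (w$j))"
    unfolding hh_def c_def k_def ..
  show ?thesis unfolding unitary_mat_def
  proof
    show "hh n w \<in> carrier_mat n n" unfolding hh_def by simp
    show "mat_adjoint (hh n w) * hh n w = 1\<^sub>m n"
    proof (rule eq_matI)
      fix i j assume ij: "i < dim_row (1\<^sub>m n :: complex mat)" "j < dim_col (1\<^sub>m n :: complex mat)"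
      then have i: "i < n" and j: "j < n" by auto
      have "(mat_adjoint (hh n w) * hh n w) $$ (i,j) =
         (\<Sum>l<n. ((if l = i then 1 else 0) - c * cnj (w$l) * w$i) * ((if l = j then 1 else 0) - c * w$l * cnj (w$j)))"
        using i j unfolding H by (simp add: scalar_prod_def cr lessThan_atLeast0 mult.commute mult.left_commute)
          (intro sum.cong refl; auto)
      also have "\<dots> = (\<Sum>l<n. (if l = i then 1 else 0) * (if l = j then 1 else 0))
          - (\<Sum>l<n. (if l = i then 1 else 0) * (c * w$l * cnj (w$j)))
          - (\<Sum>l<n. (if l = j then 1 else 0) * (c * cnj (w$l) * w$i))
          + (c * c * w$i * cnj (w$j)) * (\<Sum>l<n. cnj (w$l) * w$l)"
        by (simp add: algebra_simps sum.distrib sum_subtractf sum_distrib_left)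
      also have "\<dots> = (if i = j then 1 else 0) - 2 * c * w$i * cnj (w$j) + (c * c * k) * w$i * cnj (w$j)"
        using i j by (simp only: delta_mult sum.delta finite_lessThan lessThan_iff if_True) (simp add: k_def algebra_simps)
      also have "\<dots> = 1\<^sub>m n $$ (i,j)" using i j hc by simp
      finally show "(mat_adjoint (hh n w) * hh n w) $$ (i,j) = 1\<^sub>m n $$ (i,j)" .
    qed (auto simp: hh_def)
  qed
qed

lemma unitary_scalar: assumes "cnj \<theta> * \<theta> = 1" shows "unitary_mat n (\<theta> \<cdot>\<^sub>m 1\<^sub>m n)"
proof -
  have a2: "\<theta> * cnj \<theta> = 1" using assms by (simp add: mult.commute)
  have "mat_adjoint (\<theta> \<cdot>\<^sub>m 1\<^sub>m n) * (\<theta> \<cdot>\<^sub>m 1\<^sub>m n) = \<theta> \<cdot>\<^sub>m (cnj \<theta> \<cdot>\<^sub>m 1\<^sub>m n)"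
    by (simp add: adj_smult mult_smult_distrib[of _ n n _ n] mult_smult_assoc_mat[of _ n n _ n])
  also have "\<dots> = 1\<^sub>m n" by (rule eq_matI) (auto simp: a2 mult.assoc[symmetric])
  finally show ?thesis unfolding unitary_mat_def by simp
qed

lemma hh_apply: assumes "y \<in> carrier_vec n"
  shows "hh n w *\<^sub>v y = y - ((2 / (\<Sum>l<n. cnj (w$l) * w$l)) * (\<Sum>l<n. cnj (w$l) * y$l)) \<cdot>\<^sub>v vec n (\<lambda>i. w$i)"
proof (rule eq_vecI)
  fix i assume "i < dim_vec (y - ((2 / (\<Sum>l<n. cnj (w$l) * w$l)) * (\<Sum>l<n. cnj (w$l) * y$l)) \<cdot>\<^sub>v vec n (\<lambda>i. w$i))"
  then have i: "i < n" using assms by simp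
  have "(hh n w *\<^sub>v y) $ i = (\<Sum>l<n. ((if i = l then 1 else 0) - (2 / (\<Sum>l<n. cnj (w$l) * w$l)) * w$i * cnj (w$l)) * y$l)"
    using i assms by (simp add: hh_def scalar_prod_def lessThan_atLeast0)
  also have "\<dots> = (\<Sum>l<n. (if i = l then 1 else 0) * y$l) - (\<Sum>l<n. ((2 / (\<Sum>l<n. cnj (w$l) * w$l)) * w$i) * (cnj (w$l) * y$l))"
    by (subst sum_subtractf[symmetric]) (rule sum.cong, auto simp: algebra_simps)
  also have "\<dots> = y$i - (2 / (\<Sum>l<n. cnj (w$l) * w$l)) * w$i * (\<Sum>l<n. cnj (w$l) * y$l)"
    using i by (simp add: sum_distrib_left sum_divide_distrib mult.assoc)
  finally show "(hh n w *\<^sub>v y) $ i = (y - ((2 / (\<Sum>l<n. cnj (w$l) * w$l)) * (\<Sum>l<n. cnj (w$l) * y$l)) \<cdot>\<^sub>v vec n (\<lambda>i. w$i)) $ i"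
    using i assms by simp
qed (use assms in \<open>auto simp: hh_def\<close>)

lemma smult_one_mat_vec: assumes "x \<in> carrier_vec n"
  shows "(\<theta> \<cdot>\<^sub>m 1\<^sub>m n) *\<^sub>v x = (\<theta>::complex) \<cdot>\<^sub>v x"
proof (rule eq_vecI)
  fix i assume "i < dim_vec (\<theta> \<cdot>\<^sub>v x)"
  then have i: "i < n" using assms by simp
  have "((\<theta> \<cdot>\<^sub>m 1\<^sub>m n) *\<^sub>v x) $ i = row (\<theta> \<cdot>\<^sub>m 1\<^sub>m n) i \<bullet> x"
    using i by (simp only: index_mult_mat_vec index_smult_mat index_one_mat(2))
  also have "row (\<theta> \<cdot>\<^sub>m 1\<^sub>m n) i = \<theta> \<cdot>\<^sub>v unit_vec n i"
    using i by (simp only: row_smult index_one_mat(2) row_one)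
  also have "(\<theta> \<cdot>\<^sub>v unit_vec n i) \<bullet> x = \<theta> * (unit_vec n i \<bullet> x)"
    by (rule smult_scalar_prod_distrib[OF _ assms]) simp
  also have "unit_vec n i \<bullet> x = x $ i" by (rule scalar_prod_left_unit[OF assms i])
  finally show "((\<theta> \<cdot>\<^sub>m 1\<^sub>m n) *\<^sub>v x) $ i = (\<theta> \<cdot>\<^sub>v x) $ i"
    using i assms by simp
qed (use assms in simp)

lemma exists_unitary_map:
  assumes x: "x \<in> carrier_vec n" and v: "v \<in> carrier_vec n"
    and eq: "(\<Sum>l<n. cnj (x$l) * x$l) = (\<Sum>l<n. cnj (v$l) * v$l)"
  shows "\<exists>U. unitary_mat n U \<and> U *\<^sub>v x = v"
proof -
  define s where "s = (\<Sum>l<n. cnj (v$l) * x$l)"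
  define \<theta> where "\<theta> = (if s = 0 then 1 else cnj s / of_real (cmod s))"
  have th1: "cnj \<theta> * \<theta> = 1"
  proof (cases "s = 0")
    case False
    then have "cmod s \<noteq> 0" by simp
    then have "cnj \<theta> * \<theta> = (s * cnj s) / (of_real (cmod s))^2"
      using False by (simp add: \<theta>_def field_simps power2_eq_square)
    moreover have "s * cnj s = (of_real (cmod s))^2"
      by (metis complex_norm_square of_real_power)
    moreover have nz: "(of_real (cmod s) :: complex)^2 \<noteq> 0" using False by simp
    ultimately show ?thesis by (metis divide_self)
  qed (simp add: \<theta>_def)
  have ths: "\<theta> * s = of_real (cmod s)"
  proof (cases "s = 0")
    case False
    then have "cmod s \<noteq> 0" by simp
    then have "\<theta> * s = (s * cnj s) / (of_real (cmod s))"
      using False by (simp add: \<theta>_def field_simps)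
    moreover have "s * cnj s = (of_real (cmod s))^2"
      by (metis complex_norm_square of_real_power)
    moreover have nz: "(of_real (cmod s) :: complex) \<noteq> 0" using False by simp
    ultimately show ?thesis by (simp add: power2_eq_square)
  qed (simp add: \<theta>_def)
  define y where "y = \<theta> \<cdot>\<^sub>v x"
  define w where "w = y - v"
  have y: "y \<in> carrier_vec n" and w: "w \<in> carrier_vec n" using x v by (auto simp: y_def w_def)
  define a where "a = (\<Sum>l<n. cnj (v$l) * v$l)"
  define t where "t = (of_real (cmod s) :: complex)"
  have vy: "(\<Sum>l<n. cnj (v$l) * y$l) = t"
  proof -
    have "(\<Sum>l<n. cnj (v$l) * y$l) = (\<Sum>l<n. \<theta> * (cnj (v$l) * x$l))"
      using x by (intro sum.cong) (auto simp: y_def)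
    also have "\<dots> = \<theta> * s" by (simp add: sum_distrib_left s_def)
    finally show ?thesis using ths t_def by simp
  qed
  have yv: "(\<Sum>l<n. cnj (y$l) * v$l) = t"
  proof -
    have "(\<Sum>l<n. cnj (y$l) * v$l) = cnj (\<Sum>l<n. cnj (v$l) * y$l)" by (simp add: cnj_sum mult.commute)
    then show ?thesis using vy by (simp add: t_def)
  qed
  have yy: "(\<Sum>l<n. cnj (y$l) * y$l) = a"
  proof -
    have "(\<Sum>l<n. cnj (y$l) * y$l) = (\<Sum>l<n. (cnj \<theta> * \<theta>) * (cnj (x$l) * x$l))"
      using x by (intro sum.cong) (auto simp: y_def algebra_simps)
    then show ?thesis using th1 eq by (simp add: a_def)
  qed
  show ?thesis
  proof (cases "w = 0\<^sub>v n")
    case True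
    have "y = v"
    proof (rule eq_vecI)
      fix i assume "i < dim_vec v"
      then have i: "i < n" using v by simp
      have "(y - v) $ i = 0" using True i unfolding w_def by simp
      then show "y $ i = v $ i" using i y v by simp
    qed (use y v in simp)
    then show ?thesis using unitary_scalar[OF th1, of n] x
      by (intro exI[of _ "\<theta> \<cdot>\<^sub>m 1\<^sub>m n"]) (auto simp: y_def smult_one_mat_vec)
  next
    case False
    have ww: "(\<Sum>l<n. cnj (w$l) * w$l) = 2 * a - 2 * t"
    proof -
      have "(\<Sum>l<n. cnj (w$l) * w$l) = (\<Sum>l<n. cnj (y$l) * y$l - cnj (y$l) * v$l
           - cnj (v$l) * y$l + cnj (v$l) * v$l)"
        using y v by (intro sum.cong) (auto simp: w_def algebra_simps)
      also have "\<dots> = (\<Sum>l<n. cnj (y$l) * y$l) - (\<Sum>l<n. cnj (y$l) * v$l)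
           - (\<Sum>l<n. cnj (v$l) * y$l) + (\<Sum>l<n. cnj (v$l) * v$l)"
        by (simp only: sum.distrib sum_subtractf)
      finally have "(\<Sum>l<n. cnj (w$l) * w$l) = (\<Sum>l<n. cnj (y$l) * y$l) - (\<Sum>l<n. cnj (y$l) * v$l)
           - (\<Sum>l<n. cnj (v$l) * y$l) + (\<Sum>l<n. cnj (v$l) * v$l)" .
      then show ?thesis using yy yv vy by (simp add: a_def)
    qed
    have wy: "(\<Sum>l<n. cnj (w$l) * y$l) = a - t"
    proof -
      have "(\<Sum>l<n. cnj (w$l) * y$l) = (\<Sum>l<n. cnj (y$l) * y$l - cnj (v$l) * y$l)"
        using y v by (intro sum.cong) (auto simp: w_def algebra_simps)
      also have "\<dots> = (\<Sum>l<n. cnj (y$l) * y$l) - (\<Sum>l<n. cnj (v$l) * y$l)"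
        by (simp only: sum_subtractf)
      finally have "(\<Sum>l<n. cnj (w$l) * y$l) = (\<Sum>l<n. cnj (y$l) * y$l) - (\<Sum>l<n. cnj (v$l) * y$l)" .
      then show ?thesis using yy vy by simp
    qed
    have nz: "2 * a - 2 * t \<noteq> 0" using sumsq_nz[OF w False] ww by simp
    have "hh n w *\<^sub>v y = y - 1 \<cdot>\<^sub>v vec n (\<lambda>i. w$i)"
      unfolding hh_apply[OF y] ww wy using nz by (simp add: field_simps)
    also have "vec n (\<lambda>i. w$i) = w" using w by auto
    also have "y - 1 \<cdot>\<^sub>v w = v" using y v by (auto simp: w_def)
    finally have hy: "hh n w *\<^sub>v y = v" .
    have U: "unitary_mat n (hh n w * (\<theta> \<cdot>\<^sub>m 1\<^sub>m n))"
      by (rule unitary_mult[OF hh_unitary[OF w False] unitary_scalar[OF th1]])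
    have "(hh n w * (\<theta> \<cdot>\<^sub>m 1\<^sub>m n)) *\<^sub>v x = hh n w *\<^sub>v ((\<theta> \<cdot>\<^sub>m 1\<^sub>m n) *\<^sub>v x)"
      using x by (intro assoc_mult_mat_vec) (auto simp: hh_def)
    also have "(\<theta> \<cdot>\<^sub>m 1\<^sub>m n) *\<^sub>v x = y" using x by (simp add: y_def smult_one_mat_vec)
    finally show ?thesis using U hy by blast
  qed
qed

lemma eigen_exists:
  assumes "(K::complex mat) \<in> carrier_mat n n" "0 < n"
  shows "\<exists>lam v. v \<in> carrier_vec n \<and> v \<noteq> 0\<^sub>v n \<and> K *\<^sub>v v = lam \<cdot>\<^sub>v v"
proof -
  from spectrum_non_empty[OF assms] obtain lam where "eigenvalue K lam"
    unfolding spectrum_def by auto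
  then show ?thesis using assms(1) unfolding eigenvalue_def eigenvector_def by auto
qed

lemma rep_carrier: "unitary_rep n \<rho> \<Longrightarrow> \<rho> g \<in> carrier_mat n n"
  unfolding unitary_rep_def unitary_mat_def by auto

lemma rep_unitary: "unitary_rep n \<rho> \<Longrightarrow> unitary_mat n (\<rho> g)"
  unfolding unitary_rep_def by auto

lemma schur_scalar:
  assumes irr: "irreducible_rep n \<rho>" and K: "K \<in> carrier_mat n n"
    and comm: "\<And>g. \<rho> g * K = K * \<rho> g"
  shows "\<exists>c. K = c \<cdot>\<^sub>m 1\<^sub>m n"
proof -
  have n: "0 < n" and rep: "unitary_rep n \<rho>"
    and irrW: "\<And>W. invariant_subspace n \<rho> W \<Longrightarrow> W = {0\<^sub>v n} \<or> W = carrier_vec n"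
    using irr unfolding irreducible_rep_def by auto
  have rc: "\<And>g. \<rho> g \<in> carrier_mat n n" using rep_carrier[OF rep] .
  obtain lam v where v: "v \<in> carrier_vec n" "v \<noteq> 0\<^sub>v n" "K *\<^sub>v v = lam \<cdot>\<^sub>v v"
    using eigen_exists[OF K n] by blast
  define W where "W = {u \<in> carrier_vec n. K *\<^sub>v u = lam \<cdot>\<^sub>v u}"
  have inv: "invariant_subspace n \<rho> W"
    unfolding invariant_subspace_def
  proof (intro conjI ballI allI)
    show "W \<subseteq> carrier_vec n" unfolding W_def by blast
    have "K *\<^sub>v 0\<^sub>v n = 0\<^sub>v n" using K by (intro eq_vecI) auto
    moreover have "lam \<cdot>\<^sub>v 0\<^sub>v n = 0\<^sub>v n" by (intro eq_vecI) auto
    ultimately show "0\<^sub>v n \<in> W" unfolding W_def by simp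
  next
    fix u w assume u: "u \<in> W" and w: "w \<in> W"
    then have uc: "u \<in> carrier_vec n" and wc: "w \<in> carrier_vec n" unfolding W_def by auto
    have "K *\<^sub>v (u + w) = K *\<^sub>v u + K *\<^sub>v w" by (rule mult_add_distrib_mat_vec[OF K uc wc])
    also have "\<dots> = lam \<cdot>\<^sub>v u + lam \<cdot>\<^sub>v w" using u w unfolding W_def by simp
    also have "\<dots> = lam \<cdot>\<^sub>v (u + w)" by (rule smult_add_distrib_vec[OF uc wc, symmetric])
    finally show "u + w \<in> W" using uc wc unfolding W_def by simp
  next
    fix c u assume u: "u \<in> W"
    then have uc: "u \<in> carrier_vec n" unfolding W_def by auto
    have "K *\<^sub>v (c \<cdot>\<^sub>v u) = c \<cdot>\<^sub>v (K *\<^sub>v u)" by (rule mult_mat_vec[OF K uc])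
    also have "\<dots> = c \<cdot>\<^sub>v (lam \<cdot>\<^sub>v u)" using u unfolding W_def by simp
    also have "\<dots> = lam \<cdot>\<^sub>v (c \<cdot>\<^sub>v u)" by (simp add: smult_smult_assoc mult.commute)
    finally show "c \<cdot>\<^sub>v u \<in> W" using uc unfolding W_def by simp
  next
    fix g u assume u: "u \<in> W"
    then have uc: "u \<in> carrier_vec n" unfolding W_def by auto
    have "K *\<^sub>v (\<rho> g *\<^sub>v u) = (K * \<rho> g) *\<^sub>v u" by (rule assoc_mult_mat_vec[symmetric, OF K rc uc])
    also have "\<dots> = (\<rho> g * K) *\<^sub>v u" by (simp add: comm)
    also have "\<dots> = \<rho> g *\<^sub>v (K *\<^sub>v u)" by (rule assoc_mult_mat_vec[OF rc K uc])
    also have "\<dots> = \<rho> g *\<^sub>v (lam \<cdot>\<^sub>v u)" using u unfolding W_def by simp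
    also have "\<dots> = lam \<cdot>\<^sub>v (\<rho> g *\<^sub>v u)" by (rule mult_mat_vec[OF rc uc])
    moreover have "\<rho> g *\<^sub>v u \<in> carrier_vec n" using rc uc by (rule mult_mat_vec_carrier)
    ultimately show "\<rho> g *\<^sub>v u \<in> W" unfolding W_def by simp
  qed
  have "v \<in> W" using v unfolding W_def by simp
  then have WC: "W = carrier_vec n" using irrW[OF inv] v(2) by auto
  have "K = lam \<cdot>\<^sub>m 1\<^sub>m n"
  proof (rule eq_matI)
    fix i j assume "i < dim_row (lam \<cdot>\<^sub>m 1\<^sub>m n)" "j < dim_col (lam \<cdot>\<^sub>m 1\<^sub>m n)"
    then have i: "i < n" and j: "j < n" by auto
    have uW: "unit_vec n j \<in> W" using WC j by simp
    have "K $$ (i,j) = (K *\<^sub>v unit_vec n j) $ i" using K i j by simp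
    also have "\<dots> = (lam \<cdot>\<^sub>v unit_vec n j) $ i" using uW unfolding W_def by simp
    also have "\<dots> = (lam \<cdot>\<^sub>m 1\<^sub>m n) $$ (i,j)" using i j by simp
    finally show "K $$ (i,j) = (lam \<cdot>\<^sub>m 1\<^sub>m n) $$ (i,j)" .
  qed (use K in auto)
  then show ?thesis by blast
qed

lemma gram_zero:
  assumes T: "(T::complex mat) \<in> carrier_mat n1 n2"
    and z: "\<And>j. j < n2 \<Longrightarrow> (mat_adjoint T * T) $$ (j,j) = 0"
  shows "T = 0\<^sub>m n1 n2"
proof (rule eq_matI)
  fix i j assume "i < dim_row (0\<^sub>m n1 n2 :: complex mat)" "j < dim_col (0\<^sub>m n1 n2 :: complex mat)"
  then have i: "i < n1" and j: "j < n2" by auto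
  have "(mat_adjoint T * T) $$ (j,j) = (\<Sum>l\<in>{0..<n1}. cnj (T $$ (l,j)) * T $$ (l,j))"
    using T j by (simp add: scalar_prod_def)
  also have "\<dots> = of_real (\<Sum>l\<in>{0..<n1}. (cmod (T $$ (l,j)))^2)"
    unfolding of_real_sum by (rule sum.cong) (simp_all only: complex_norm_square mult.commute)
  finally have eq: "(mat_adjoint T * T) $$ (j,j) = of_real (\<Sum>l\<in>{0..<n1}. (cmod (T $$ (l,j)))^2)" .
  have "(\<Sum>l\<in>{0..<n1}. (cmod (T $$ (l,j)))^2) = 0" using z[OF j] eq of_real_eq_0_iff by metis
  then have "\<forall>l\<in>{0..<n1}. (cmod (T $$ (l,j)))^2 = 0"
    by (subst sum_nonneg_eq_0_iff[symmetric]) auto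
  then have "T $$ (i,j) = 0" using i by simp
  then show "T $$ (i,j) = 0\<^sub>m n1 n2 $$ (i,j)" using i j by simp
qed (use T in auto)

lemma scale_back: "(lam::complex) \<noteq> 0 \<Longrightarrow> (1/lam) \<cdot>\<^sub>m (lam \<cdot>\<^sub>m 1\<^sub>m n) = 1\<^sub>m n"
  by (rule eq_matI) auto

lemma schur_iso:
  assumes irr1: "irreducible_rep n1 \<rho>1" and irr2: "irreducible_rep n2 \<rho>2"
    and T: "T \<in> carrier_mat n1 n2"
    and comm: "\<And>g. \<rho>1 g * T = T * \<rho>2 g" and nz: "T \<noteq> 0\<^sub>m n1 n2"
  shows "rep_isomorphic n2 \<rho>2 n1 \<rho>1"
proof -
  have rep1: "unitary_rep n1 \<rho>1" and rep2: "unitary_rep n2 \<rho>2"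
    using irr1 irr2 unfolding irreducible_rep_def by auto
  note u1 = rep_unitary[OF rep1] and u2 = rep_unitary[OF rep2]
  note c1 = rep_carrier[OF rep1] and c2 = rep_carrier[OF rep2]
  define AT where "AT = mat_adjoint T"
  have ATc: "AT \<in> carrier_mat n2 n1" using T by (simp add: AT_def)
  have adjc: "\<rho>2 g * AT = AT * \<rho>1 g" for g
  proof -
    have aR1: "mat_adjoint (\<rho>1 g) \<in> carrier_mat n1 n1" using c1 by simp
    have aR2: "mat_adjoint (\<rho>2 g) \<in> carrier_mat n2 n2" using c2 by simp
    have e: "AT * mat_adjoint (\<rho>1 g) = mat_adjoint (\<rho>2 g) * AT"
      using arg_cong[OF comm[of g], of mat_adjoint] adj_mult[OF c1 T] adj_mult[OF T c2]
      by (simp add: AT_def)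
    have "AT * \<rho>1 g = \<rho>2 g * (mat_adjoint (\<rho>2 g) * (AT * \<rho>1 g))"
      by (rule unitary_cancel(2)[OF u2, of _ n1, symmetric]) (use ATc c1 in simp)
    also have "mat_adjoint (\<rho>2 g) * (AT * \<rho>1 g) = (mat_adjoint (\<rho>2 g) * AT) * \<rho>1 g"
      by (rule assoc_mult_mat[symmetric, OF aR2 ATc c1])
    also have "\<dots> = (AT * mat_adjoint (\<rho>1 g)) * \<rho>1 g" by (simp add: e)
    also have "\<dots> = AT * (mat_adjoint (\<rho>1 g) * \<rho>1 g)" by (rule assoc_mult_mat[OF ATc aR1 c1])
    also have "\<dots> = AT" using unitary_left[OF u1] ATc by simp
    finally show ?thesis by simp
  qed
  have K2c: "AT * T \<in> carrier_mat n2 n2" using ATc T by simp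
  have K2comm: "\<rho>2 g * (AT * T) = (AT * T) * \<rho>2 g" for g
  proof -
    have "\<rho>2 g * (AT * T) = (\<rho>2 g * AT) * T" by (rule assoc_mult_mat[symmetric, OF c2 ATc T])
    also have "\<dots> = (AT * \<rho>1 g) * T" by (simp add: adjc)
    also have "\<dots> = AT * (\<rho>1 g * T)" by (rule assoc_mult_mat[OF ATc c1 T])
    also have "\<dots> = AT * (T * \<rho>2 g)" by (simp add: comm)
    also have "\<dots> = (AT * T) * \<rho>2 g" by (rule assoc_mult_mat[symmetric, OF ATc T c2])
    finally show ?thesis .
  qed
  have K1c: "T * AT \<in> carrier_mat n1 n1" using ATc T by simp
  have K1comm: "\<rho>1 g * (T * AT) = (T * AT) * \<rho>1 g" for g
  proof -
    have "\<rho>1 g * (T * AT) = (\<rho>1 g * T) * AT" by (rule assoc_mult_mat[symmetric, OF c1 T ATc])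
    also have "\<dots> = (T * \<rho>2 g) * AT" by (simp add: comm)
    also have "\<dots> = T * (\<rho>2 g * AT)" by (rule assoc_mult_mat[OF T c2 ATc])
    also have "\<dots> = T * (AT * \<rho>1 g)" by (simp add: adjc)
    also have "\<dots> = (T * AT) * \<rho>1 g" by (rule assoc_mult_mat[symmetric, OF T ATc c1])
    finally show ?thesis .
  qed
  obtain lam where lam: "AT * T = lam \<cdot>\<^sub>m 1\<^sub>m n2"
    using schur_scalar[OF irr2 K2c K2comm] by blast
  obtain mu where mu: "T * AT = mu \<cdot>\<^sub>m 1\<^sub>m n1"
    using schur_scalar[OF irr1 K1c K1comm] by blast
  have lam0: "lam \<noteq> 0"
  proof
    assume "lam = 0"
    then have "\<And>j. j < n2 \<Longrightarrow> (mat_adjoint T * T) $$ (j,j) = 0" using lam by (simp add: AT_def)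
    then have "T = 0\<^sub>m n1 n2" by (rule gram_zero[OF T])
    then show False using nz by simp
  qed
  obtain i j where ij: "i < n1" "j < n2" "T $$ (i,j) \<noteq> 0"
  proof -
    have "\<not> (\<forall>i<n1. \<forall>j<n2. T $$ (i,j) = 0)"
    proof
      assume "\<forall>i<n1. \<forall>j<n2. T $$ (i,j) = 0"
      then have "T = 0\<^sub>m n1 n2" using T by (intro eq_matI) auto
      then show False using nz by simp
    qed
    then show ?thesis using that by blast
  qed
  have "T * (AT * T) = (T * AT) * T" by (rule assoc_mult_mat[symmetric, OF T ATc T])
  then have "T * (lam \<cdot>\<^sub>m 1\<^sub>m n2) = (mu \<cdot>\<^sub>m 1\<^sub>m n1) * T" by (simp add: lam mu)
  then have "(T * (lam \<cdot>\<^sub>m 1\<^sub>m n2)) $$ (i,j) = ((mu \<cdot>\<^sub>m 1\<^sub>m n1) * T) $$ (i,j)" by simp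
  then have "lam * T $$ (i,j) = mu * T $$ (i,j)"
    using T ij by (simp add: mult_smult_distrib[OF T] mult_smult_assoc_mat[OF _ T])
  then have lm: "lam = mu" using ij(3) by simp
  define T' where "T' = (1/lam) \<cdot>\<^sub>m AT"
  have T'c: "T' \<in> carrier_mat n2 n1" using ATc by (simp add: T'_def)
  have "T * T' = (1/lam) \<cdot>\<^sub>m (T * AT)" unfolding T'_def by (rule mult_smult_distrib[OF T ATc])
  then have TT': "T * T' = 1\<^sub>m n1" using mu lm lam0 scale_back by simp
  have "T' * T = (1/lam) \<cdot>\<^sub>m (AT * T)" unfolding T'_def by (rule mult_smult_assoc_mat[OF ATc T])
  then have T'T: "T' * T = 1\<^sub>m n2" using lam lam0 scale_back by simp
  show ?thesis unfolding rep_isomorphic_def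
    using T T'c TT' T'T comm by metis
qed

definition ext1 :: "nat \<Rightarrow> complex mat \<Rightarrow> complex mat" where
  "ext1 n V = mat (Suc n) (Suc n) (\<lambda>(i,k). if i = 0 then (if k = 0 then 1 else 0)
      else if k = 0 then 0 else V $$ (i - 1, k - 1))"

lemma ext1_unitary: assumes V: "unitary_mat n V" shows "unitary_mat (Suc n) (ext1 n V)"
proof -
  have Vc: "V \<in> carrier_mat n n" using V unitary_carrier by auto
  have VV: "mat_adjoint V * V = 1\<^sub>m n" using unitary_left[OF V] .
  have VVe: "(\<Sum>l\<in>{0..<n}. cnj (V $$ (l,i)) * V $$ (l,k)) = (if i = k then 1 else 0)" if "i < n" "k < n" for i k
  proof -
    have "(mat_adjoint V * V) $$ (i,k) = (\<Sum>l\<in>{0..<n}. cnj (V $$ (l,i)) * V $$ (l,k))"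
      using Vc that by (simp add: scalar_prod_def)
    then show ?thesis using VV that by simp
  qed
  show ?thesis unfolding unitary_mat_def
  proof
    show "ext1 n V \<in> carrier_mat (Suc n) (Suc n)" by (simp add: ext1_def)
    show "mat_adjoint (ext1 n V) * ext1 n V = 1\<^sub>m (Suc n)"
    proof (rule eq_matI)
      fix i k assume "i < dim_row (1\<^sub>m (Suc n) :: complex mat)" "k < dim_col (1\<^sub>m (Suc n) :: complex mat)"
      then have i: "i < Suc n" and k: "k < Suc n" by auto
      have "(mat_adjoint (ext1 n V) * ext1 n V) $$ (i,k) =
          (\<Sum>l\<in>{0..<Suc n}. cnj (ext1 n V $$ (l,i)) * ext1 n V $$ (l,k))"
        using i k by (simp add: scalar_prod_def ext1_def)
      also have "\<dots> = cnj (ext1 n V $$ (0,i)) * ext1 n V $$ (0,k) +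
          (\<Sum>l\<in>{0..<n}. cnj (ext1 n V $$ (Suc l,i)) * ext1 n V $$ (Suc l,k))"
        by (simp only: sum.atLeast0_lessThan_Suc_shift comp_def)
      also have "\<dots> = 1\<^sub>m (Suc n) $$ (i,k)"
      proof (cases i)
        case 0
        then show ?thesis using i k by (simp add: ext1_def)
      next
        case (Suc i')
        note i' = this
        show ?thesis
        proof (cases k)
          case 0
          then show ?thesis using i k i' by (simp add: ext1_def)
        next
          case (Suc k')
          have "(\<Sum>l\<in>{0..<n}. cnj (ext1 n V $$ (Suc l,i)) * ext1 n V $$ (Suc l,k)) =
              (\<Sum>l\<in>{0..<n}. cnj (V $$ (l,i')) * V $$ (l,k'))"
            using i k i' Suc by (intro sum.cong refl) (simp add: ext1_def)
          then show ?thesis using i k i' Suc VVe[of i' k'] by (simp add: ext1_def)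
        qed
      qed
      finally show "(mat_adjoint (ext1 n V) * ext1 n V) $$ (i,k) = 1\<^sub>m (Suc n) $$ (i,k)" .
    qed (simp_all add: ext1_def)
  qed
qed

lemma gram_entry: "A \<in> carrier_mat n m \<Longrightarrow> r < m \<Longrightarrow> s < m \<Longrightarrow>
  (mat_adjoint A * A) $$ (r,s) = (\<Sum>l\<in>{0..<n}. cnj (A $$ (l,r)) * A $$ (l,s))"
  by (simp add: scalar_prod_def)

lemma gram_unitary_mult: assumes U: "unitary_mat n U" and A: "A \<in> carrier_mat n m"
  shows "mat_adjoint (U * A) * (U * A) = mat_adjoint A * A"
proof -
  have Uc: "U \<in> carrier_mat n n" using U unitary_carrier by auto
  have "mat_adjoint (U * A) * (U * A) = (mat_adjoint A * mat_adjoint U) * (U * A)"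
    by (simp add: adj_mult[OF Uc A])
  also have "\<dots> = mat_adjoint A * (mat_adjoint U * (U * A))"
    by (rule assoc_mult_mat) (use A Uc in auto)
  also have "\<dots> = mat_adjoint A * A" using unitary_cancel(1)[OF U A] by simp
  finally show ?thesis .
qed

lemma sumsq_of_real: "(\<Sum>l\<in>{0..<n}. cnj (A $$ (l,j)) * A $$ (l,j)) = of_real (\<Sum>l\<in>{0..<n}. (cmod (A $$ (l,j)))^2)"
  unfolding of_real_sum by (rule sum.cong) (simp_all only: complex_norm_square mult.commute)

lemma gram_unitary:
  "A \<in> carrier_mat n m \<Longrightarrow> A' \<in> carrier_mat n m \<Longrightarrow> mat_adjoint A * A = mat_adjoint A' * A'
   \<Longrightarrow> \<exists>U. unitary_mat n U \<and> A = U * A'"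
proof (induction n arbitrary: A A')
  case 0
  have "A = A'" using "0.prems"(1,2) by (intro eq_matI) auto
  moreover have "1\<^sub>m 0 * A' = A'" using "0.prems"(2) by simp
  ultimately show ?case using unitary_one[of 0] by metis
next
  case (Suc n)
  note A = Suc.prems(1) and A' = Suc.prems(2) and gram = Suc.prems(3)
  show ?case
  proof (cases "A = 0\<^sub>m (Suc n) m")
    case True
    have "A' = 0\<^sub>m (Suc n) m"
    proof (rule gram_zero[OF A'])
      fix j assume j: "j < m"
      have "(mat_adjoint A' * A') $$ (j,j) = (mat_adjoint A * A) $$ (j,j)" using gram by simp
      also have "\<dots> = 0" using True j by (simp add: gram_entry[OF A])
      finally show "(mat_adjoint A' * A') $$ (j,j) = 0" .
    qed
    then have "A = 1\<^sub>m (Suc n) * A'" using True by simp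
    then show ?thesis using unitary_one by blast
  next
    case False
    obtain i0 j where ij: "i0 < Suc n" "j < m" "A $$ (i0,j) \<noteq> 0"
    proof -
      have "\<not> (\<forall>i<Suc n. \<forall>j<m. A $$ (i,j) = 0)"
      proof
        assume "\<forall>i<Suc n. \<forall>j<m. A $$ (i,j) = 0"
        then have "A = 0\<^sub>m (Suc n) m" using A by (intro eq_matI) auto
        then show False using False by simp
      qed
      then show ?thesis using that by blast
    qed
    note j = ij(2)
    define S where "S = (\<Sum>l\<in>{0..<Suc n}. (cmod (A $$ (l,j)))^2)"
    define g where "g = (mat_adjoint A * A) $$ (j,j)"
    have gS: "g = of_real S" unfolding g_def S_def gram_entry[OF A j j] by (rule sumsq_of_real)
    have Spos: "S > 0" unfolding S_def using ij by (intro sum_pos2[of _ i0]) auto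
    define c where "c = (of_real (sqrt S) :: complex)"
    have cc: "cnj c * c = g"
    proof -
      have "cnj c * c = of_real (sqrt S * sqrt S)" by (simp only: c_def complex_cnj_complex_of_real of_real_mult)
      also have "sqrt S * sqrt S = S" using Spos by simp
      finally show ?thesis using gS by simp
    qed
    have c0: "c \<noteq> 0" using Spos by (simp add: c_def)
    define e where "e = vec (Suc n) (\<lambda>l. if l = 0 then c else 0)"
    have ec: "e \<in> carrier_vec (Suc n)" by (simp add: e_def)
    have esum: "(\<Sum>l<Suc n. cnj (e$l) * e$l) = g"
    proof -
      have "(\<Sum>l<Suc n. cnj (e$l) * e$l) = (\<Sum>l<Suc n. if l = 0 then cnj c * c else 0)"
        by (intro sum.cong refl) (simp add: e_def)
      then show ?thesis using cc by simp
    qed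
    have vc: "col A j \<in> carrier_vec (Suc n)" and v'c: "col A' j \<in> carrier_vec (Suc n)"
      using A A' j by auto
    have vsum: "(\<Sum>l<Suc n. cnj (col A j $ l) * col A j $ l) = g"
      unfolding g_def gram_entry[OF A j j] lessThan_atLeast0 using A j by (intro sum.cong refl) auto
    have v'sum: "(\<Sum>l<Suc n. cnj (col A' j $ l) * col A' j $ l) = g"
      unfolding g_def gram gram_entry[OF A' j j] lessThan_atLeast0 using A' j by (intro sum.cong refl) auto
    obtain P where P: "unitary_mat (Suc n) P" "P *\<^sub>v e = col A j"
      using exists_unitary_map[OF ec vc] esum vsum by metis
    obtain P' where P': "unitary_mat (Suc n) P'" "P' *\<^sub>v e = col A' j"
      using exists_unitary_map[OF ec v'c] esum v'sum by metis
    have Pc: "P \<in> carrier_mat (Suc n) (Suc n)" and P'c: "P' \<in> carrier_mat (Suc n) (Suc n)"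
      using P P' unitary_carrier by auto
    define B where "B = mat_adjoint P * A"
    define B' where "B' = mat_adjoint P' * A'"
    have Bc: "B \<in> carrier_mat (Suc n) m" and B'c: "B' \<in> carrier_mat (Suc n) m"
      using Pc P'c A A' by (auto simp: B_def B'_def)
    have gB: "mat_adjoint B * B = mat_adjoint A * A"
      unfolding B_def by (rule gram_unitary_mult[OF unitary_adj[OF P(1)] A])
    have gB': "mat_adjoint B' * B' = mat_adjoint A' * A'"
      unfolding B'_def by (rule gram_unitary_mult[OF unitary_adj[OF P'(1)] A'])
    have colB: "col B j = e"
    proof -
      have "col B j = mat_adjoint P *\<^sub>v col A j" unfolding B_def by (rule col_mult2[OF adj_carrier[OF Pc] A j])
      also have "\<dots> = mat_adjoint P *\<^sub>v (P *\<^sub>v e)" using P(2) by simp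
      also have "\<dots> = (mat_adjoint P * P) *\<^sub>v e" by (rule assoc_mult_mat_vec[symmetric, OF adj_carrier[OF Pc] Pc ec])
      also have "\<dots> = e" using unitary_left[OF P(1)] ec by simp
      finally show ?thesis .
    qed
    have colB': "col B' j = e"
    proof -
      have "col B' j = mat_adjoint P' *\<^sub>v col A' j" unfolding B'_def by (rule col_mult2[OF adj_carrier[OF P'c] A' j])
      also have "\<dots> = mat_adjoint P' *\<^sub>v (P' *\<^sub>v e)" using P'(2) by simp
      also have "\<dots> = (mat_adjoint P' * P') *\<^sub>v e" by (rule assoc_mult_mat_vec[symmetric, OF adj_carrier[OF P'c] P'c ec])
      also have "\<dots> = e" using unitary_left[OF P'(1)] ec by simp
      finally show ?thesis .
    qed
    have Bj: "B $$ (l,j) = e $ l" if "l < Suc n" for l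
      using colB that Bc j by (metis carrier_matD(1) carrier_matD(2) index_col)
    have B'j: "B' $$ (l,j) = e $ l" if "l < Suc n" for l
      using colB' that B'c j by (metis carrier_matD(1) carrier_matD(2) index_col)
    have row0: "cnj c * B $$ (0,s) = (mat_adjoint A * A) $$ (j,s)" if s: "s < m" for s
    proof -
      have "(mat_adjoint B * B) $$ (j,s) = (\<Sum>l\<in>{0..<Suc n}. cnj (B $$ (l,j)) * B $$ (l,s))"
        by (rule gram_entry[OF Bc j s])
      also have "\<dots> = (\<Sum>l\<in>{0..<Suc n}. if l = 0 then cnj c * B $$ (0,s) else 0)"
        by (intro sum.cong refl) (simp add: Bj e_def)
      also have "\<dots> = cnj c * B $$ (0,s)" by simp
      finally show ?thesis using gB by simp
    qed
    have row0': "cnj c * B' $$ (0,s) = (mat_adjoint A * A) $$ (j,s)" if s: "s < m" for s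
    proof -
      have "(mat_adjoint B' * B') $$ (j,s) = (\<Sum>l\<in>{0..<Suc n}. cnj (B' $$ (l,j)) * B' $$ (l,s))"
        by (rule gram_entry[OF B'c j s])
      also have "\<dots> = (\<Sum>l\<in>{0..<Suc n}. if l = 0 then cnj c * B' $$ (0,s) else 0)"
        by (intro sum.cong refl) (simp add: B'j e_def)
      also have "\<dots> = cnj c * B' $$ (0,s)" by simp
      finally show ?thesis using gB' gram by simp
    qed
    have r0: "B $$ (0,s) = B' $$ (0,s)" if "s < m" for s
      using row0[OF that] row0'[OF that] c0 by (metis complex_cnj_zero_iff mult_left_cancel)
    define C where "C = mat n m (\<lambda>(i,s). B $$ (Suc i, s))"
    define C' where "C' = mat n m (\<lambda>(i,s). B' $$ (Suc i, s))"
    have Cc: "C \<in> carrier_mat n m" and C'c: "C' \<in> carrier_mat n m" by (auto simp: C_def C'_def)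
    have gsplit: "(mat_adjoint X * X) $$ (r,s) = cnj (X $$ (0,r)) * X $$ (0,s) +
        (mat_adjoint (mat n m (\<lambda>(i,s). X $$ (Suc i, s))) * mat n m (\<lambda>(i,s). X $$ (Suc i, s))) $$ (r,s)"
      if X: "X \<in> carrier_mat (Suc n) m" and r: "r < m" and s: "s < m" for X r s
    proof -
      have "(mat_adjoint X * X) $$ (r,s) = (\<Sum>l\<in>{0..<Suc n}. cnj (X $$ (l,r)) * X $$ (l,s))"
        by (rule gram_entry[OF X r s])
      also have "\<dots> = cnj (X $$ (0,r)) * X $$ (0,s) + (\<Sum>l\<in>{0..<n}. cnj (X $$ (Suc l,r)) * X $$ (Suc l,s))"
        by (simp only: sum.atLeast0_lessThan_Suc_shift comp_def)
      also have "(\<Sum>l\<in>{0..<n}. cnj (X $$ (Suc l,r)) * X $$ (Suc l,s)) =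
          (mat_adjoint (mat n m (\<lambda>(i,s). X $$ (Suc i, s))) * mat n m (\<lambda>(i,s). X $$ (Suc i, s))) $$ (r,s)"
        by (subst gram_entry[of _ n m]) (use r s in \<open>auto intro!: sum.cong\<close>)
      finally show ?thesis .
    qed
    have gC: "mat_adjoint C * C = mat_adjoint C' * C'"
    proof (rule eq_matI)
      fix r s assume "r < dim_row (mat_adjoint C' * C')" "s < dim_col (mat_adjoint C' * C')"
      then have r: "r < m" and s: "s < m" using C'c by auto
      have "(mat_adjoint B * B) $$ (r,s) = (mat_adjoint B' * B') $$ (r,s)" using gB gB' gram by simp
      then show "(mat_adjoint C * C) $$ (r,s) = (mat_adjoint C' * C') $$ (r,s)"
        using gsplit[OF Bc r s] gsplit[OF B'c r s] r0[OF r] r0[OF s] unfolding C_def C'_def by simp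
    qed (use Cc C'c in auto)
    obtain V where V: "unitary_mat n V" "C = V * C'" using Suc.IH[OF Cc C'c gC] by blast
    have Vc: "V \<in> carrier_mat n n" using V unitary_carrier by auto
    define W where "W = ext1 n V"
    have WU: "unitary_mat (Suc n) W" unfolding W_def by (rule ext1_unitary[OF V(1)])
    have Wc: "W \<in> carrier_mat (Suc n) (Suc n)" using WU unitary_carrier by auto
    have BW: "B = W * B'"
    proof (rule eq_matI)
      fix i s assume "i < dim_row (W * B')" "s < dim_col (W * B')"
      then have i: "i < Suc n" and s: "s < m" using Wc B'c by auto
      have "(W * B') $$ (i,s) = (\<Sum>l\<in>{0..<Suc n}. W $$ (i,l) * B' $$ (l,s))"
        using Wc B'c i s by (simp add: scalar_prod_def)
      also have "\<dots> = W $$ (i,0) * B' $$ (0,s) + (\<Sum>l\<in>{0..<n}. W $$ (i,Suc l) * B' $$ (Suc l,s))"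
        by (simp only: sum.atLeast0_lessThan_Suc_shift comp_def)
      also have "\<dots> = B $$ (i,s)"
      proof (cases i)
        case 0
        then show ?thesis using r0[OF s] by (simp add: W_def ext1_def)
      next
        case (Suc i')
        have "(\<Sum>l\<in>{0..<n}. W $$ (i,Suc l) * B' $$ (Suc l,s)) = (\<Sum>l\<in>{0..<n}. V $$ (i',l) * C' $$ (l,s))"
          using i s Suc by (intro sum.cong refl) (simp add: W_def ext1_def C'_def)
        also have "\<dots> = (V * C') $$ (i',s)" using Vc C'c i s Suc by (simp add: scalar_prod_def)
        also have "\<dots> = C $$ (i',s)" using V(2) by simp
        also have "\<dots> = B $$ (i,s)" using i s Suc by (simp add: C_def)
        finally show ?thesis using i Suc by (simp add: W_def ext1_def)
      qed
      finally show "B $$ (i,s) = (W * B') $$ (i,s)" by simp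
    qed (use Bc Wc B'c in auto)
    have AB: "A = P * B" unfolding B_def using unitary_cancel(2)[OF P(1) A] by simp
    define U where "U = P * W * mat_adjoint P'"
    have UU: "unitary_mat (Suc n) U" unfolding U_def
      by (intro unitary_mult unitary_adj P(1) P'(1) WU)
    have "U * A' = P * (W * (mat_adjoint P' * A'))"
    proof -
      have aP': "mat_adjoint P' \<in> carrier_mat (Suc n) (Suc n)" using P'c by simp
      have "U * A' = (P * W) * (mat_adjoint P' * A')" unfolding U_def
        by (rule assoc_mult_mat[OF _ aP' A', of _ "Suc n"]) (use Pc Wc in simp)
      also have "\<dots> = P * (W * (mat_adjoint P' * A'))"
        by (rule assoc_mult_mat[OF Pc Wc, of _ m]) (use aP' A' in simp)
      finally show ?thesis .
    qed
    also have "\<dots> = A" using AB BW by (simp add: B'_def)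
    finally show ?thesis using UU by metis
  qed
qed

locale haar_ctx =
  fixes M :: "'g::{topological_group_add, t2_space} measure"
  assumes cpt: "compact (UNIV :: 'g set)"
    and haar: "normalized_haar M"
begin

lemma prob: "prob_space M" using haar by (simp add: normalized_haar_def)

lemma sets_M: "sets M = sets borel" using haar by (simp add: normalized_haar_def)

lemma space_M: "space M = UNIV"
  using sets_eq_imp_space_eq[OF sets_M] by simp

lemma inv: "A \<in> sets M \<Longrightarrow> emeasure M ((\<lambda>x. g + x) ` A) = emeasure M A"
  using haar by (simp add: normalized_haar_def)

lemma meas_M: "(f :: 'g \<Rightarrow> 'b::topological_space) \<in> borel_measurable borel \<Longrightarrow> f \<in> borel_measurable M"
proof -
  have "borel_measurable M = (borel_measurable borel :: ('g \<Rightarrow> 'b::topological_space) set)"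
    by (rule measurable_cong_sets[OF sets_M refl])
  then show "f \<in> borel_measurable borel \<Longrightarrow> f \<in> borel_measurable M" by simp
qed

lemma cont_meas: "continuous_on UNIV (f :: 'g \<Rightarrow> 'b::topological_space) \<Longrightarrow> f \<in> borel_measurable M"
  by (intro meas_M borel_measurable_continuous_onI)

lemma cont_integrable:
  fixes f :: "'g \<Rightarrow> complex"
  assumes "continuous_on UNIV f"
  shows "integrable M f"
proof -
  interpret prob_space M by (rule prob)
  have "compact (f ` UNIV)" by (rule compact_continuous_image[OF assms cpt])
  then obtain B where B: "\<forall>y\<in>f ` UNIV. norm y \<le> B"
    using compact_imp_bounded bounded_iff by metis
  show ?thesis
    by (rule integrable_const_bound[where B=B]) (use B cont_meas[OF assms] in auto)
qed

lemma translate_meas: "(\<lambda>x. h + x) \<in> measurable M M"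
proof -
  have "continuous_on UNIV (\<lambda>x::'g. h + x)" by (intro continuous_intros)
  then have "(\<lambda>x::'g. h + x) \<in> borel_measurable borel" by (rule borel_measurable_continuous_onI)
  moreover have "measurable M M = (borel_measurable borel :: ('g \<Rightarrow> 'g) set)"
    by (rule measurable_cong_sets[OF sets_M sets_M])
  ultimately show ?thesis by simp
qed

lemma distr_translate: "distr M M (\<lambda>x. h + x) = M"
proof (rule measure_eqI)
  show "sets (distr M M (\<lambda>x. h + x)) = sets M" by simp
  fix A assume A: "A \<in> sets (distr M M (\<lambda>x. h + x))"
  then have A': "A \<in> sets M" by simp
  have "(\<lambda>x. h + x) -` A \<inter> space M = (\<lambda>x. - h + x) ` A"
    unfolding space_M
  proof (auto simp: image_iff)
    fix x assume "h + x \<in> A"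
    then show "\<exists>y\<in>A. x = - h + y" by (intro bexI[of _ "h + x"]) (simp_all add: add.assoc[symmetric])
  qed
  then have "emeasure (distr M M (\<lambda>x. h + x)) A = emeasure M ((\<lambda>x. - h + x) ` A)"
    using A' translate_meas by (simp add: emeasure_distr)
  also have "\<dots> = emeasure M A" using inv[OF A'] .
  finally show "emeasure (distr M M (\<lambda>x. h + x)) A = emeasure M A" .
qed

lemma integral_translate:
  fixes f :: "'g \<Rightarrow> complex"
  assumes "f \<in> borel_measurable M"
  shows "(\<integral>x. f (h + x) \<partial>M) = (\<integral>x. f x \<partial>M)"
proof -
  have "(\<integral>x. f (h + x) \<partial>M) = integral\<^sup>L (distr M M (\<lambda>x. h + x)) f"
    by (rule integral_distr[symmetric, OF translate_meas assms])
  then show ?thesis by (simp add: distr_translate)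
qed

end

definition Tm :: "'g measure \<Rightarrow> nat \<Rightarrow> ('g \<Rightarrow> complex mat) \<Rightarrow> nat \<Rightarrow> ('g \<Rightarrow> complex mat) \<Rightarrow> nat \<Rightarrow> nat \<Rightarrow> complex mat" where
  "Tm M n1 \<rho>1 n2 \<rho>2 a b = mat n1 n2 (\<lambda>(i,j). \<integral>g. \<rho>1 g $$ (i,a) * cnj (\<rho>2 g $$ (j,b)) \<partial>M)"

lemma entry_cont: "unitary_rep n \<rho> \<Longrightarrow> i < n \<Longrightarrow> j < n \<Longrightarrow> continuous_on UNIV (\<lambda>g. \<rho> g $$ (i,j))"
  unfolding unitary_rep_def by blast

context haar_ctx
begin

lemma prod_cont:
  assumes "unitary_rep n1 \<rho>1" "unitary_rep n2 \<rho>2" "i < n1" "a < n1" "j < n2" "b < n2"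
  shows "continuous_on UNIV (\<lambda>g. \<rho>1 g $$ (i,a) * cnj (\<rho>2 g $$ (j,b)))"
  using entry_cont[OF assms(1,3,4)] entry_cont[OF assms(2,5,6)] by (intro continuous_intros)

lemma prod_integrable:
  assumes "unitary_rep n1 \<rho>1" "unitary_rep n2 \<rho>2" "i < n1" "a < n1" "j < n2" "b < n2"
  shows "integrable M (\<lambda>g. \<rho>1 g $$ (i,a) * cnj (\<rho>2 g $$ (j,b)))"
  by (rule cont_integrable[OF prod_cont[OF assms]])

lemma T_key:
  assumes r1: "unitary_rep n1 \<rho>1" and r2: "unitary_rep n2 \<rho>2" and a: "a < n1" and b: "b < n2"
  shows "\<rho>1 h * Tm M n1 \<rho>1 n2 \<rho>2 a b * mat_adjoint (\<rho>2 h) = Tm M n1 \<rho>1 n2 \<rho>2 a b"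
proof -
  define T where "T = Tm M n1 \<rho>1 n2 \<rho>2 a b"
  note c1 = rep_carrier[OF r1] and c2 = rep_carrier[OF r2]
  have Tc: "T \<in> carrier_mat n1 n2" by (simp add: T_def Tm_def)
  have Tij: "T $$ (c,d) = (\<integral>g. \<rho>1 g $$ (c,a) * cnj (\<rho>2 g $$ (d,b)) \<partial>M)" if "c < n1" "d < n2" for c d
    using that by (simp add: T_def Tm_def)
  have mul1: "\<rho>1 (h + g) $$ (i,a) = (\<Sum>c\<in>{0..<n1}. \<rho>1 h $$ (i,c) * \<rho>1 g $$ (c,a))" if "i < n1" for i g
    using r1 that a c1[of h] c1[of g] unfolding unitary_rep_def by (simp add: scalar_prod_def)
  have mul2: "\<rho>2 (h + g) $$ (j,b) = (\<Sum>d\<in>{0..<n2}. \<rho>2 h $$ (j,d) * \<rho>2 g $$ (d,b))" if "j < n2" for j g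
    using r2 that b c2[of h] c2[of g] unfolding unitary_rep_def by (simp add: scalar_prod_def)
  show ?thesis unfolding T_def[symmetric]
  proof (rule eq_matI)
    fix i j assume "i < dim_row T" "j < dim_col T"
    then have i: "i < n1" and j: "j < n2" using Tc by auto
    have "T $$ (i,j) = (\<integral>g. \<rho>1 (h + g) $$ (i,a) * cnj (\<rho>2 (h + g) $$ (j,b)) \<partial>M)"
      unfolding Tij[OF i j]
      by (rule integral_translate[symmetric, OF cont_meas[OF prod_cont[OF r1 r2 i a j b]]])
    also have "\<dots> = (\<integral>g. (\<Sum>c\<in>{0..<n1}. \<Sum>d\<in>{0..<n2}. (\<rho>1 h $$ (i,c) * cnj (\<rho>2 h $$ (j,d))) *
          (\<rho>1 g $$ (c,a) * cnj (\<rho>2 g $$ (d,b)))) \<partial>M)"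
    proof (rule Bochner_Integration.integral_cong[OF refl])
      fix g
      show "\<rho>1 (h + g) $$ (i,a) * cnj (\<rho>2 (h + g) $$ (j,b)) = (\<Sum>c\<in>{0..<n1}. \<Sum>d\<in>{0..<n2}. (\<rho>1 h $$ (i,c) * cnj (\<rho>2 h $$ (j,d))) *
          (\<rho>1 g $$ (c,a) * cnj (\<rho>2 g $$ (d,b))))"
        unfolding mul1[OF i] mul2[OF j] cnj_sum sum_product
        by (intro sum.cong refl) (simp add: ac_simps)
    qed
    also have "\<dots> = (\<Sum>c\<in>{0..<n1}. \<Sum>d\<in>{0..<n2}. (\<rho>1 h $$ (i,c) * cnj (\<rho>2 h $$ (j,d))) * T $$ (c,d))"
    proof -
      have int: "integrable M (\<lambda>g. (\<rho>1 h $$ (i,c) * cnj (\<rho>2 h $$ (j,d))) * (\<rho>1 g $$ (c,a) * cnj (\<rho>2 g $$ (d,b))))"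
        if "c < n1" "d < n2" for c d
        using prod_integrable[OF r1 r2 that(1) a that(2) b] by simp
      have "(\<integral>g. (\<Sum>c\<in>{0..<n1}. \<Sum>d\<in>{0..<n2}. (\<rho>1 h $$ (i,c) * cnj (\<rho>2 h $$ (j,d))) *
          (\<rho>1 g $$ (c,a) * cnj (\<rho>2 g $$ (d,b)))) \<partial>M) =
          (\<Sum>c\<in>{0..<n1}. \<integral>g. (\<Sum>d\<in>{0..<n2}. (\<rho>1 h $$ (i,c) * cnj (\<rho>2 h $$ (j,d))) *
          (\<rho>1 g $$ (c,a) * cnj (\<rho>2 g $$ (d,b)))) \<partial>M)"
        by (rule Bochner_Integration.integral_sum) (use int in auto)
      also have "\<dots> = (\<Sum>c\<in>{0..<n1}. \<Sum>d\<in>{0..<n2}. \<integral>g. (\<rho>1 h $$ (i,c) * cnj (\<rho>2 h $$ (j,d))) *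
          (\<rho>1 g $$ (c,a) * cnj (\<rho>2 g $$ (d,b))) \<partial>M)"
        by (intro sum.cong refl Bochner_Integration.integral_sum) (use int in auto)
      also have "\<dots> = (\<Sum>c\<in>{0..<n1}. \<Sum>d\<in>{0..<n2}. (\<rho>1 h $$ (i,c) * cnj (\<rho>2 h $$ (j,d))) * T $$ (c,d))"
        by (intro sum.cong refl) (simp add: Tij prod_integrable[OF r1 r2 _ a _ b])
      finally show ?thesis .
    qed
    also have "\<dots> = (\<rho>1 h * T * mat_adjoint (\<rho>2 h)) $$ (i,j)"
      using i j c1[of h] c2[of h] Tc
      by (simp add: scalar_prod_def sum_distrib_right sum_distrib_left ac_simps) (rule sum.swap)
    finally show "(\<rho>1 h * T * mat_adjoint (\<rho>2 h)) $$ (i,j) = T $$ (i,j)" by simp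
  qed (use Tc c1 c2 in auto)
qed

lemma T_intertwine:
  assumes r1: "unitary_rep n1 \<rho>1" and r2: "unitary_rep n2 \<rho>2" and a: "a < n1" and b: "b < n2"
  shows "\<rho>1 h * Tm M n1 \<rho>1 n2 \<rho>2 a b = Tm M n1 \<rho>1 n2 \<rho>2 a b * \<rho>2 h"
proof -
  define T where "T = Tm M n1 \<rho>1 n2 \<rho>2 a b"
  note c1 = rep_carrier[OF r1] and c2 = rep_carrier[OF r2]
  have Tc: "T \<in> carrier_mat n1 n2" by (simp add: T_def Tm_def)
  have RT: "\<rho>1 h * T \<in> carrier_mat n1 n2" using c1[of h] Tc by simp
  have aR: "mat_adjoint (\<rho>2 h) \<in> carrier_mat n2 n2" using c2[of h] by simp
  have "T * \<rho>2 h = (\<rho>1 h * T * mat_adjoint (\<rho>2 h)) * \<rho>2 h"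
    using T_key[OF r1 r2 a b, of h] by (simp add: T_def)
  also have "\<dots> = (\<rho>1 h * T) * (mat_adjoint (\<rho>2 h) * \<rho>2 h)"
    by (rule assoc_mult_mat[OF RT aR c2])
  also have "\<dots> = \<rho>1 h * T" using unitary_left[OF rep_unitary[OF r2]] right_mult_one_mat[OF RT] by simp
  finally show ?thesis by (simp add: T_def)
qed

end

context haar_ctx
begin

lemma orth_diff:
  assumes irr1: "irreducible_rep n1 \<rho>1" and irr2: "irreducible_rep n2 \<rho>2"
    and niso: "\<not> rep_isomorphic n2 \<rho>2 n1 \<rho>1" and a: "a < n1" and b: "b < n2"
  shows "Tm M n1 \<rho>1 n2 \<rho>2 a b = 0\<^sub>m n1 n2"
proof (rule ccontr)
  assume ne: "Tm M n1 \<rho>1 n2 \<rho>2 a b \<noteq> 0\<^sub>m n1 n2"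
  have r1: "unitary_rep n1 \<rho>1" and r2: "unitary_rep n2 \<rho>2"
    using irr1 irr2 unfolding irreducible_rep_def by auto
  have Tc: "Tm M n1 \<rho>1 n2 \<rho>2 a b \<in> carrier_mat n1 n2" by (simp add: Tm_def)
  have "rep_isomorphic n2 \<rho>2 n1 \<rho>1"
    by (rule schur_iso[OF irr1 irr2 Tc T_intertwine[OF r1 r2 a b] ne])
  then show False using niso by simp
qed

lemma orth_same:
  assumes irr: "irreducible_rep n \<rho>" and a: "a < n" and b: "b < n"
  shows "Tm M n \<rho> n \<rho> a b = (if a = b then 1 / of_nat n else 0) \<cdot>\<^sub>m 1\<^sub>m n"
proof -
  interpret P: prob_space M by (rule prob)
  have r: "unitary_rep n \<rho>" and n0: "0 < n" using irr unfolding irreducible_rep_def by auto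
  define T where "T = Tm M n \<rho> n \<rho> a b"
  have Tc: "T \<in> carrier_mat n n" by (simp add: T_def Tm_def)
  obtain c where Tc': "T = c \<cdot>\<^sub>m 1\<^sub>m n"
    using schur_scalar[OF irr Tc] T_intertwine[OF r r a b] unfolding T_def by blast
  have tr1: "(\<Sum>i\<in>{0..<n}. T $$ (i,i)) = of_nat n * c" using Tc' by simp
  have "(\<Sum>i\<in>{0..<n}. T $$ (i,i)) = (\<Sum>i\<in>{0..<n}. \<integral>g. \<rho> g $$ (i,a) * cnj (\<rho> g $$ (i,b)) \<partial>M)"
    by (intro sum.cong refl) (simp add: T_def Tm_def)
  also have "\<dots> = (\<integral>g. (\<Sum>i\<in>{0..<n}. \<rho> g $$ (i,a) * cnj (\<rho> g $$ (i,b))) \<partial>M)"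
    by (rule Bochner_Integration.integral_sum[symmetric]) (use prod_integrable[OF r r _ a _ b] in auto)
  also have "\<dots> = (\<integral>g. (if a = b then 1 else 0) \<partial>M)"
  proof (rule Bochner_Integration.integral_cong[OF refl])
    fix g
    have "(mat_adjoint (\<rho> g) * \<rho> g) $$ (b,a) = (\<Sum>i\<in>{0..<n}. cnj (\<rho> g $$ (i,b)) * \<rho> g $$ (i,a))"
      by (rule gram_entry[OF rep_carrier[OF r] b a])
    moreover have "mat_adjoint (\<rho> g) * \<rho> g = 1\<^sub>m n" by (rule unitary_left[OF rep_unitary[OF r]])
    ultimately have "(\<Sum>i\<in>{0..<n}. \<rho> g $$ (i,a) * cnj (\<rho> g $$ (i,b))) = (if b = a then 1 else 0)"
      using a b by (simp add: mult.commute)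
    then show "(\<Sum>i\<in>{0..<n}. \<rho> g $$ (i,a) * cnj (\<rho> g $$ (i,b))) = (if a = b then 1 else 0)"
      by (cases "a = b") auto
  qed
  also have "\<dots> = (if a = b then 1 else 0)" using P.prob_space by simp
  finally have tr2: "(\<Sum>i\<in>{0..<n}. T $$ (i,i)) = (if a = b then 1 else 0)" .
  have "c = (if a = b then 1 / of_nat n else 0)" using tr1 tr2 n0
    by (auto simp: field_simps)
  then show ?thesis using Tc' by (simp add: T_def)
qed

lemma sm_expand:
  assumes reps: "\<forall>l<L. unitary_rep (N l) (\<rho> l)" and A: "in_V L N R A"
    and l: "l < L" and k: "k < L" and i: "i < N l" and j: "j < N k" and r: "r < R l" and s: "s < R k"
  shows "(\<integral>g. coord (G_act \<rho> g A) (l,i,r) * cnj (coord (G_act \<rho> g A) (k,j,s)) \<partial>M) =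
    (\<Sum>a\<in>{0..<N l}. \<Sum>b\<in>{0..<N k}. (A l $$ (a,r) * cnj (A k $$ (b,s))) * Tm M (N l) (\<rho> l) (N k) (\<rho> k) a b $$ (i,j))"
proof -
  have rl: "unitary_rep (N l) (\<rho> l)" and rk: "unitary_rep (N k) (\<rho> k)" using reps l k by auto
  have Al: "A l \<in> carrier_mat (N l) (R l)" and Ak: "A k \<in> carrier_mat (N k) (R k)"
    using A l k unfolding in_V_def by auto
  have co1: "coord (G_act \<rho> g A) (l,i,r) = (\<Sum>a\<in>{0..<N l}. \<rho> l g $$ (i,a) * A l $$ (a,r))" for g
    using rep_carrier[OF rl, of g] Al i r by (simp add: coord_def G_act_def scalar_prod_def)
  have co2: "coord (G_act \<rho> g A) (k,j,s) = (\<Sum>b\<in>{0..<N k}. \<rho> k g $$ (j,b) * A k $$ (b,s))" for g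
    using rep_carrier[OF rk, of g] Ak j s by (simp add: coord_def G_act_def scalar_prod_def)
  have int: "integrable M (\<lambda>g. (A l $$ (a,r) * cnj (A k $$ (b,s))) * (\<rho> l g $$ (i,a) * cnj (\<rho> k g $$ (j,b))))"
    if "a < N l" "b < N k" for a b
    using prod_integrable[OF rl rk i that(1) j that(2)] by simp
  have "(\<integral>g. coord (G_act \<rho> g A) (l,i,r) * cnj (coord (G_act \<rho> g A) (k,j,s)) \<partial>M) =
    (\<integral>g. (\<Sum>a\<in>{0..<N l}. \<Sum>b\<in>{0..<N k}. (A l $$ (a,r) * cnj (A k $$ (b,s))) * (\<rho> l g $$ (i,a) * cnj (\<rho> k g $$ (j,b)))) \<partial>M)"
    unfolding co1 co2 cnj_sum sum_product
    by (rule Bochner_Integration.integral_cong[OF refl]) (intro sum.cong refl, simp add: ac_simps)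
  also have "\<dots> = (\<Sum>a\<in>{0..<N l}. \<integral>g. (\<Sum>b\<in>{0..<N k}. (A l $$ (a,r) * cnj (A k $$ (b,s))) * (\<rho> l g $$ (i,a) * cnj (\<rho> k g $$ (j,b)))) \<partial>M)"
    by (rule Bochner_Integration.integral_sum) (use int in auto)
  also have "\<dots> = (\<Sum>a\<in>{0..<N l}. \<Sum>b\<in>{0..<N k}. \<integral>g. (A l $$ (a,r) * cnj (A k $$ (b,s))) * (\<rho> l g $$ (i,a) * cnj (\<rho> k g $$ (j,b))) \<partial>M)"
    by (intro sum.cong refl Bochner_Integration.integral_sum) (use int in auto)
  also have "\<dots> = (\<Sum>a\<in>{0..<N l}. \<Sum>b\<in>{0..<N k}. (A l $$ (a,r) * cnj (A k $$ (b,s))) * Tm M (N l) (\<rho> l) (N k) (\<rho> k) a b $$ (i,j))"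
    using i j by (intro sum.cong refl) (simp add: Tm_def prod_integrable[OF rl rk i _ j])
  finally show ?thesis .
qed

end

theorem theorem2p3:
  fixes M :: "'g::{topological_group_add, t2_space} measure"
    and L :: nat and N R :: "nat \<Rightarrow> nat" and \<rho> :: "nat \<Rightarrow> 'g \<Rightarrow> complex mat"
    and A A' :: "nat \<Rightarrow> complex mat"
  assumes "compact (UNIV :: 'g set)"
    and "normalized_haar M"
    and "\<forall>l<L. irreducible_rep (N l) (\<rho> l)"
    and "\<forall>l<L. \<forall>k<L. l \<noteq> k \<longrightarrow> \<not> rep_isomorphic (N l) (\<rho> l) (N k) (\<rho> k)"
    and "in_V L N R A" and "in_V L N R A'"
  shows "second_moment L N R \<rho> M A = second_moment L N R \<rho> M A' \<longleftrightarrow> H_related L N A A'"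
proof -
  interpret haar_ctx M using assms(1,2) by unfold_locales
  note irr = assms(3) and niso = assms(4) and AV = assms(5) and A'V = assms(6)
  have reps: "\<forall>l<L. unitary_rep (N l) (\<rho> l)" using irr unfolding irreducible_rep_def by auto
  have Npos: "0 < N l" if "l < L" for l using irr that unfolding irreducible_rep_def by auto
  define Gm where "Gm X l r s = (\<Sum>a\<in>{0..<N l}. X l $$ (a,r) * cnj (X l $$ (a,s)))" for X l r s
  have val: "(\<integral>g. coord (G_act \<rho> g X) (l,i,r) * cnj (coord (G_act \<rho> g X) (k,j,s)) \<partial>M) =
      (if l = k \<and> i = j then Gm X l r s / of_nat (N l) else 0)"
    if X: "in_V L N R X" and l: "l < L" and k: "k < L" and i: "i < N l" and j: "j < N k"
      and r: "r < R l" and s: "s < R k" for X l i r k j s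
  proof -
    note e = sm_expand[OF reps X l k i j r s]
    show ?thesis
    proof (cases "l = k")
      case False
      have irl: "irreducible_rep (N l) (\<rho> l)" and irk: "irreducible_rep (N k) (\<rho> k)" using irr l k by auto
      have ni: "\<not> rep_isomorphic (N k) (\<rho> k) (N l) (\<rho> l)" using niso l k False by auto
      have "Tm M (N l) (\<rho> l) (N k) (\<rho> k) a b $$ (i,j) = 0" if "a < N l" "b < N k" for a b
        using orth_diff[OF irl irk ni that] i j by simp
      then show ?thesis unfolding e using False by simp
    next
      case True
      then have k': "k = l" by simp
      have irl: "irreducible_rep (N l) (\<rho> l)" using irr l by auto
      have Te: "Tm M (N l) (\<rho> l) (N l) (\<rho> l) a b $$ (i,j) = (if a = b then 1 / of_nat (N l) else 0) * (if i = j then 1 else 0)"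
        if "a < N l" "b < N l" for a b
        using orth_same[OF irl that] i j True by simp
      have "(\<Sum>a\<in>{0..<N l}. \<Sum>b\<in>{0..<N l}. (X l $$ (a,r) * cnj (X l $$ (b,s))) * Tm M (N l) (\<rho> l) (N l) (\<rho> l) a b $$ (i,j))
          = (\<Sum>a\<in>{0..<N l}. \<Sum>b\<in>{0..<N l}. if b = a then (X l $$ (a,r) * cnj (X l $$ (b,s))) * ((1 / of_nat (N l)) * (if i = j then 1 else 0)) else 0)"
        by (intro sum.cong refl) (auto simp: Te)
      also have "\<dots> = (\<Sum>a\<in>{0..<N l}. (X l $$ (a,r) * cnj (X l $$ (a,s))) * ((1 / of_nat (N l)) * (if i = j then 1 else 0)))"
        by (intro sum.cong refl) simp
      also have "\<dots> = (if i = j then Gm X l r s / of_nat (N l) else 0)"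
        by (simp add: Gm_def sum_distrib_right[symmetric] sum_divide_distrib)
      finally have calc: "(\<Sum>a\<in>{0..<N l}. \<Sum>b\<in>{0..<N l}. (X l $$ (a,r) * cnj (X l $$ (b,s))) * Tm M (N l) (\<rho> l) (N l) (\<rho> l) a b $$ (i,j))
          = (if i = j then Gm X l r s / of_nat (N l) else 0)" .
      show ?thesis unfolding k' using e[unfolded k'] calc by simp
    qed
  qed
  have smf: "second_moment L N R \<rho> M X = (\<lambda>(p,q). if p \<in> V_index L N R \<and> q \<in> V_index L N R then
      (case p of (l,i,r) \<Rightarrow> case q of (k,j,s) \<Rightarrow> if l = k \<and> i = j then Gm X l r s / of_nat (N l) else 0) else 0)"
    if X: "in_V L N R X" for X
  proof (rule ext, clarify)
    fix l i r k j s
    show "second_moment L N R \<rho> M X ((l,i,r),(k,j,s)) = (if (l,i,r) \<in> V_index L N R \<and> (k,j,s) \<in> V_index L N R then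
      (if l = k \<and> i = j then Gm X l r s / of_nat (N l) else 0) else 0)"
      unfolding second_moment_def using val[OF X] by (auto simp: V_index_def)
  qed
  have step1: "second_moment L N R \<rho> M A = second_moment L N R \<rho> M A' \<longleftrightarrow>
      (\<forall>l<L. \<forall>r<R l. \<forall>s<R l. Gm A l r s = Gm A' l r s)"
  proof
    assume eq: "second_moment L N R \<rho> M A = second_moment L N R \<rho> M A'"
    show "\<forall>l<L. \<forall>r<R l. \<forall>s<R l. Gm A l r s = Gm A' l r s"
    proof (intro allI impI)
      fix l r s assume l: "l < L" and r: "r < R l" and s: "s < R l"
      have mem: "(l,0,r) \<in> V_index L N R" "(l,0,s) \<in> V_index L N R"
        using l r s Npos[OF l] by (auto simp: V_index_def)
      have "second_moment L N R \<rho> M A ((l,0,r),(l,0,s)) = second_moment L N R \<rho> M A' ((l,0,r),(l,0,s))"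
        using eq by simp
      then have "Gm A l r s / of_nat (N l) = Gm A' l r s / of_nat (N l)"
        unfolding smf[OF AV] smf[OF A'V] using mem by simp
      then show "Gm A l r s = Gm A' l r s" using Npos[OF l] by (simp add: divide_cancel_right)
    qed
  next
    assume GE: "\<forall>l<L. \<forall>r<R l. \<forall>s<R l. Gm A l r s = Gm A' l r s"
    show "second_moment L N R \<rho> M A = second_moment L N R \<rho> M A'"
      unfolding smf[OF AV] smf[OF A'V]
    proof (rule ext, clarify)
      fix l i r k j s
      show "(if (l,i,r) \<in> V_index L N R \<and> (k,j,s) \<in> V_index L N R then
          (if l = k \<and> i = j then Gm A l r s / of_nat (N l) else 0) else 0) =
        (if (l,i,r) \<in> V_index L N R \<and> (k,j,s) \<in> V_index L N R then
          (if l = k \<and> i = j then Gm A' l r s / of_nat (N l) else 0) else 0)"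
        using GE by (auto simp: V_index_def)
    qed
  qed
  have Gm_gram: "Gm X l r s = cnj ((mat_adjoint (X l) * X l) $$ (r,s))"
    if X: "in_V L N R X" and l: "l < L" and r: "r < R l" and s: "s < R l" for X l r s
  proof -
    have Xc: "X l \<in> carrier_mat (N l) (R l)" using X l unfolding in_V_def by auto
    show ?thesis unfolding gram_entry[OF Xc r s] Gm_def by (simp add: mult.commute)
  qed
  have step2: "(\<forall>l<L. \<forall>r<R l. \<forall>s<R l. Gm A l r s = Gm A' l r s) \<longleftrightarrow>
      (\<forall>l<L. mat_adjoint (A l) * A l = mat_adjoint (A' l) * A' l)"
  proof
    assume GE: "\<forall>l<L. \<forall>r<R l. \<forall>s<R l. Gm A l r s = Gm A' l r s"
    show "\<forall>l<L. mat_adjoint (A l) * A l = mat_adjoint (A' l) * A' l"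
    proof (intro allI impI)
      fix l assume l: "l < L"
      have Ac: "A l \<in> carrier_mat (N l) (R l)" and A'c: "A' l \<in> carrier_mat (N l) (R l)"
        using AV A'V l unfolding in_V_def by auto
      show "mat_adjoint (A l) * A l = mat_adjoint (A' l) * A' l"
      proof (rule eq_matI)
        fix r s assume "r < dim_row (mat_adjoint (A' l) * A' l)" "s < dim_col (mat_adjoint (A' l) * A' l)"
        then have r: "r < R l" and s: "s < R l" using A'c by auto
        have "cnj ((mat_adjoint (A l) * A l) $$ (r,s)) = cnj ((mat_adjoint (A' l) * A' l) $$ (r,s))"
          using GE l r s Gm_gram[OF AV l r s] Gm_gram[OF A'V l r s] by simp
        then show "(mat_adjoint (A l) * A l) $$ (r,s) = (mat_adjoint (A' l) * A' l) $$ (r,s)" by simp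
      qed (use Ac A'c in auto)
    qed
  next
    assume GE: "\<forall>l<L. mat_adjoint (A l) * A l = mat_adjoint (A' l) * A' l"
    show "\<forall>l<L. \<forall>r<R l. \<forall>s<R l. Gm A l r s = Gm A' l r s"
      using GE Gm_gram[OF AV] Gm_gram[OF A'V] by simp
  qed
  have step3: "(\<forall>l<L. mat_adjoint (A l) * A l = mat_adjoint (A' l) * A' l) \<longleftrightarrow> H_related L N A A'"
  proof
    assume GE: "\<forall>l<L. mat_adjoint (A l) * A l = mat_adjoint (A' l) * A' l"
    have "\<forall>l. \<exists>U. l < L \<longrightarrow> unitary_mat (N l) U \<and> A l = U * A' l"
    proof
      fix l
      show "\<exists>U. l < L \<longrightarrow> unitary_mat (N l) U \<and> A l = U * A' l"
      proof (cases "l < L")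
        case True
        have Ac: "A l \<in> carrier_mat (N l) (R l)" and A'c: "A' l \<in> carrier_mat (N l) (R l)"
          using AV A'V True unfolding in_V_def by auto
        then show ?thesis using gram_unitary[OF Ac A'c] GE True by blast
      qed simp
    qed
    then obtain U where "\<forall>l. l < L \<longrightarrow> unitary_mat (N l) (U l) \<and> A l = U l * A' l"
      by (metis choice)
    then show "H_related L N A A'" unfolding H_related_def by blast
  next
    assume "H_related L N A A'"
    then obtain U where U: "\<forall>l<L. unitary_mat (N l) (U l)" "\<forall>l<L. A l = U l * A' l"
      unfolding H_related_def by blast
    show "\<forall>l<L. mat_adjoint (A l) * A l = mat_adjoint (A' l) * A' l"
    proof (intro allI impI)
      fix l assume l: "l < L"
      have A'c: "A' l \<in> carrier_mat (N l) (R l)" using A'V l unfolding in_V_def by auto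
      show "mat_adjoint (A l) * A l = mat_adjoint (A' l) * A' l"
        using U l gram_unitary_mult[OF _ A'c, of "U l"] by simp
    qed
  qed
  show ?thesis using step1 step2 step3 by simp
qed

end
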